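(* Let $f:\mathbb{R}^n\to\mathbb{R}^n$ be smooth, $N\ge2$, and $A$ a real symmetric $n\times n$ matrix with $A\succ0$, and consider $$\dot{x}_i=f(x_i)+A(x_{i-1}-x_i),\qquad i=1,\dots,N,$$ indices modulo $N$. If there is $\lambda>0$ with $(J_f(z))_s+A\preceq-\lambda I$ for all $z\in\mathbb{R}^n$, then for every initial condition $\|x_i(t)-x_j(t)\|\to0$ exponentially as $t\to\infty$ for all $i,j$.
   Context: $J_f(z)=\frac{\partial f}{\partial z}(z)$ is the Jacobian of $f$. For a square matrix $M$, $M_s=\tfrac12(M+M^T)$. $M\succ0$ means positive definite; $M\preceq N$ means $N-M$ is positive semidefinite. *)

theory Defs
  imports "HOL-Analysis.Analysis"
begin

text \<open>C-infinity real-valued functions on R^n: differentiable everywhere and every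
  partial derivative is again C-infinity (coinductively, i.e. to all orders).\<close>
coinductive smooth_real :: "(real^'n \<Rightarrow> real) \<Rightarrow> bool" where
  "(\<forall>x. g differentiable (at x)) \<Longrightarrow>
   (\<forall>i. smooth_real (\<lambda>x. frechet_derivative g (at x) (axis i 1))) \<Longrightarrow> smooth_real g"

definition smooth_map :: "(real^'n \<Rightarrow> real^'m) \<Rightarrow> bool" where
  "smooth_map f \<longleftrightarrow> (\<forall>i. smooth_real (\<lambda>x. f x $ i))"

definition jacobian :: "(real^'n \<Rightarrow> real^'m) \<Rightarrow> real^'n \<Rightarrow> real^'n^'m" where
  "jacobian f z = (\<chi> i j. frechet_derivative f (at z) (axis j 1) $ i)"

definition sym_part :: "real^'n^'n \<Rightarrow> real^'n^'n" where
  "sym_part M = (1/2) *\<^sub>R (M + transpose M)"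

definition psd :: "real^'n^'n \<Rightarrow> bool" where
  "psd M \<longleftrightarrow> (\<forall>v. 0 \<le> v \<bullet> (M *v v))"

definition pos_def :: "real^'n^'n \<Rightarrow> bool" where
  "pos_def M \<longleftrightarrow> (\<forall>v. v \<noteq> 0 \<longrightarrow> 0 < v \<bullet> (M *v v))"

definition loewner_le :: "real^'n^'n \<Rightarrow> real^'n^'n \<Rightarrow> bool" where
  "loewner_le M N \<longleftrightarrow> psd (N - M)"

end

theory Submission
  imports Defs
begin

lemma smooth_diff:
  fixes f :: "real^'n \<Rightarrow> real^'m"
  assumes "smooth_map f" shows "f differentiable (at z)"
proof -
  have h: "\<forall>i. (\<lambda>x. f x $ i) differentiable (at z)" using assms unfolding smooth_map_def
    by (metis smooth_real.cases)
  show ?thesis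
    by (subst differentiable_componentwise_within) (auto simp: Basis_vec_def inner_axis h)
qed

lemma jac_eq:
  fixes f :: "real^'n \<Rightarrow> real^'m"
  assumes "(f has_derivative f') (at z)" shows "jacobian f z *v v = f' v"
proof -
  have "frechet_derivative f (at z) = f'" using frechet_derivative_at[OF assms] by simp
  hence "jacobian f z = matrix f'" unfolding jacobian_def matrix_def by simp
  moreover have "linear f'" using assms has_derivative_linear by blast
  ultimately show ?thesis by (simp add: matrix_works)
qed

lemma contr_quad:
  fixes J A :: "real^'n^'n"
  assumes "loewner_le (sym_part J + A) ((- lam) *\<^sub>R mat 1)" and "pos_def A"
  shows "v \<bullet> (J *v v) \<le> - lam * (v \<bullet> v)"
proof -
  have z: "0 \<le> v \<bullet> (((- lam) *\<^sub>R mat 1 - (sym_part J + A)) *v v)"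
    using assms(1) unfolding loewner_le_def psd_def by blast
  have neg: "\<And>M::real^'n^'n. (- M) *v v = - (M *v v)"
    by (simp add: vec_eq_iff matrix_vector_mult_def sum_negf)
  have "v \<bullet> ((- (lam *\<^sub>R mat 1)) *v v) = - lam * (v \<bullet> v)"
    by (simp add: neg scaleR_matrix_vector_assoc[symmetric])
  note e = this
  have "v \<bullet> (((- lam) *\<^sub>R mat 1 - (sym_part J + A)) *v v) = - lam * (v \<bullet> v) - (1/2) * (v \<bullet> (J *v v)) - (1/2) * (v \<bullet> (transpose J *v v)) - v \<bullet> (A *v v)"
    unfolding sym_part_def
    by (simp add: matrix_vector_mult_diff_rdistrib matrix_vector_mult_add_rdistrib
        scaleR_matrix_vector_assoc[symmetric] inner_diff_right inner_add_right algebra_simps e)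
  moreover have "v \<bullet> (transpose J *v v) = v \<bullet> (J *v v)"
    by (simp add: transpose_matrix_vector dot_lmul_matrix[symmetric] inner_commute)
  ultimately have "0 \<le> - lam * (v \<bullet> v) - v \<bullet> (J *v v) - v \<bullet> (A *v v)" using z by simp
  moreover have "0 \<le> v \<bullet> (A *v v)" using assms(2) unfolding pos_def_def
    by (cases "v = 0") (auto intro: less_imp_le)
  ultimately show ?thesis by simp
qed

lemma mvt_contr:
  fixes f :: "real^'n \<Rightarrow> real^'n"
  assumes der: "\<And>z. (f has_derivative F z) (at z)"
    and q: "\<And>z v. v \<bullet> F z v \<le> - lam * (v \<bullet> v)"
  shows "(a - b) \<bullet> (f a - f b) \<le> - lam * ((a - b) \<bullet> (a - b))"
proof -
  define d where "d = a - b"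
  define h where "h s = d \<bullet> f (b + s *\<^sub>R d) + lam * (d \<bullet> d) * s" for s :: real
  have hd: "(h has_real_derivative (d \<bullet> F (b + s *\<^sub>R d) d + lam * (d \<bullet> d))) (at s)" for s
  proof -
    have l: "linear (F (b + s *\<^sub>R d))" using der has_derivative_linear by blast
    have g1: "((\<lambda>s. b + s *\<^sub>R d) has_derivative (\<lambda>h. h *\<^sub>R d)) (at s)"
      by (auto intro!: derivative_eq_intros)
    have g2: "((\<lambda>s. f (b + s *\<^sub>R d)) has_derivative (\<lambda>h. F (b + s *\<^sub>R d) (h *\<^sub>R d))) (at s)"
      using has_derivative_compose[OF g1 der] by (simp add: o_def)
    have g3: "((\<lambda>s. d \<bullet> f (b + s *\<^sub>R d)) has_derivative (\<lambda>h. d \<bullet> F (b + s *\<^sub>R d) (h *\<^sub>R d))) (at s)"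
      using has_derivative_inner[OF has_derivative_const g2] by simp
    have g4: "((\<lambda>s. lam * (d \<bullet> d) * s) has_derivative (\<lambda>h. h * (lam * (d \<bullet> d)))) (at s)"
      by (auto intro!: derivative_eq_intros)
    have "(h has_derivative (\<lambda>h. d \<bullet> F (b + s *\<^sub>R d) (h *\<^sub>R d) + h * (lam * (d \<bullet> d)))) (at s)"
      unfolding h_def using has_derivative_add[OF g3 g4] by simp
    moreover have "(\<lambda>h. d \<bullet> F (b + s *\<^sub>R d) (h *\<^sub>R d) + h * (lam * (d \<bullet> d)))
        = (*) (d \<bullet> F (b + s *\<^sub>R d) d + lam * (d \<bullet> d))"
      using linear_cmul[OF l] by (auto simp: algebra_simps)
    ultimately show ?thesis unfolding has_field_derivative_def by simp
  qed
  have "h 1 \<le> h 0"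
  proof (rule DERIV_nonpos_imp_nonincreasing[of 0 1 h])
    fix s :: real
    show "\<exists>y. (h has_real_derivative y) (at s) \<and> y \<le> 0"
      using hd[of s] q[of d "b + s *\<^sub>R d"] by auto
  qed simp
  thus ?thesis unfolding h_def d_def by (simp add: inner_diff_right)
qed

lemma sq_deriv:
  fixes g :: "real \<Rightarrow> 'a::real_inner"
  assumes "(g has_vector_derivative g') (at t within S)"
  shows "((\<lambda>s. g s \<bullet> g s) has_real_derivative 2 * (g t \<bullet> g')) (at t within S)"
proof -
  have a: "(g has_derivative (\<lambda>h. h *\<^sub>R g')) (at t within S)"
    using assms unfolding has_vector_derivative_def .
  have "((\<lambda>s. g s \<bullet> g s) has_derivative (\<lambda>h. g t \<bullet> (h *\<^sub>R g') + (h *\<^sub>R g') \<bullet> g t)) (at t within S)"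
    by (rule has_derivative_inner[OF a a])
  moreover have "(\<lambda>h. g t \<bullet> (h *\<^sub>R g') + (h *\<^sub>R g') \<bullet> g t) = (*) (2 * (g t \<bullet> g'))"
    by (auto simp: inner_commute algebra_simps)
  ultimately show ?thesis unfolding has_field_derivative_def by simp
qed

lemma decay:
  fixes W W' :: "real \<Rightarrow> real"
  assumes d: "\<And>t. t \<ge> 0 \<Longrightarrow> (W has_real_derivative W' t) (at t within {0..})"
    and le: "\<And>t. t \<ge> 0 \<Longrightarrow> W' t \<le> - c * W t"
    and t: "t \<ge> 0"
  shows "W t \<le> W 0 * exp (- c * t)"
proof -
  define h where "h s = W s * exp (c * s)" for s
  have hd: "(h has_real_derivative ((W' s + c * W s) * exp (c * s))) (at s within {0..})" if "s \<ge> 0" for s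
    unfolding h_def using d[OF that]
    by (auto intro!: derivative_eq_intros simp: algebra_simps)
  have "h t \<le> h 0"
  proof (cases "t = 0")
    case False
    hence tp: "0 < t" using t by simp
    have cont: "continuous_on {0..t} h"
    proof -
      have "continuous_on {0..} h"
        using hd by (intro continuous_on_eq_continuous_within[THEN iffD2] ballI)
          (auto intro: DERIV_continuous)
      thus ?thesis by (rule continuous_on_subset) auto
    qed
    have dif: "h differentiable (at s)" if "0 < s" "s < t" for s
    proof -
      have "at s within {0..} = at s" using that by (intro at_within_interior) auto
      thus ?thesis using hd[of s] that by (auto simp: real_differentiable_def)
    qed
    obtain l z where z: "0 < z" "z < t" "(h has_real_derivative l) (at z)" "h t - h 0 = (t - 0) * l"
      using MVT[OF tp cont dif] by blast
    have "at z within {0..} = at z" using z by (intro at_within_interior) auto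
    hence "l = (W' z + c * W z) * exp (c * z)" using hd[of z] z DERIV_unique by force
    moreover have "W' z + c * W z \<le> 0" using le[of z] z by simp
    ultimately have "l \<le> 0" by (simp add: mult_nonpos_nonneg)
    thus ?thesis using z tp mult_nonneg_nonpos[of t l] by simp
  qed simp
  hence "W t * exp (c * t) \<le> W 0" unfolding h_def by simp
  hence "W t * exp (c * t) * exp (- c * t) \<le> W 0 * exp (- c * t)" by (simp add: mult_right_mono)
  thus ?thesis by (simp add: mult.assoc exp_add[symmetric])
qed

lemma A_ineq:
  fixes A :: "real^'n^'n"
  assumes "transpose A = A" "pos_def A"
  shows "a \<bullet> (A *v b) \<le> (a \<bullet> (A *v a) + b \<bullet> (A *v b)) / 2"
proof -
  have "0 \<le> (a - b) \<bullet> (A *v (a - b))" using assms(2) unfolding pos_def_def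
    by (cases "a - b = 0") (auto intro: less_imp_le)
  moreover have "b \<bullet> (A *v a) = a \<bullet> (A *v b)"
    by (metis assms(1) dot_lmul_matrix inner_commute transpose_matrix_vector)
  ultimately show ?thesis
    by (simp add: matrix_vector_mult_diff_distrib inner_diff_left inner_diff_right)
qed

lemma shift_bij:
  assumes "N \<ge> (1::nat)"
  shows "bij_betw (\<lambda>i. (i + N - 1) mod N) {..<N} {..<N}"
proof -
  have e: "(i + N - 1) mod N = (if i = 0 then N - 1 else i - 1)" if "i < N" for i
  proof (cases "i = 0")
    case True thus ?thesis using assms by simp
  next
    case False
    have "(i + N - 1) mod N = ((i - 1) + N) mod N"
      by (rule arg_cong[where f="\<lambda>x. x mod N"]) (use False in arith)
    also have "\<dots> = i - 1" using that by simp
    finally show ?thesis using False by simp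
  qed
  have inj: "inj_on (\<lambda>i. (i + N - 1) mod N) {..<N}"
  proof (rule inj_onI)
    fix x y assume xy: "x \<in> {..<N}" "y \<in> {..<N}" "(x + N - 1) mod N = (y + N - 1) mod N"
    have "(if x = 0 then N - 1 else x - 1) = (if y = 0 then N - 1 else y - 1)"
      using xy e[of x] e[of y] by simp
    thus "x = y" using xy by (auto split: if_splits)
  qed
  have "(\<lambda>i. (i + N - 1) mod N) ` {..<N} \<subseteq> {..<N}" using assms by auto
  hence "(\<lambda>i. (i + N - 1) mod N) ` {..<N} = {..<N}" using endo_inj_surj inj by blast
  thus ?thesis using inj by (simp add: bij_betw_def)
qed

theorem corollary3p9:
  fixes f :: "real^'n \<Rightarrow> real^'n"
    and A :: "real^'n^'n"
    and N :: nat
    and lam :: real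
    and x :: "real \<Rightarrow> nat \<Rightarrow> real^'n"
  assumes smooth: "smooth_map f"
    and N2: "N \<ge> 2"
    and symA: "transpose A = A"
    and posA: "pos_def A"
    and lam_pos: "lam > 0"
    and contr: "\<forall>z. loewner_le (sym_part (jacobian f z) + A) ((- lam) *\<^sub>R mat 1)"
    and ode: "\<forall>i<N. \<forall>t\<ge>0. ((\<lambda>s. x s i) has_vector_derivative
                 (f (x t i) + A *v (x t ((i + N - 1) mod N) - x t i))) (at t within {0..})"
  shows "\<forall>i<N. \<forall>j<N. \<exists>c k. k > 0 \<and>
           (\<forall>t\<ge>0. norm (x t i - x t j) \<le> c * exp (- k * t))"
proof -
  define p where "p i = (i + N - 1) mod N" for i
  define v where "v t i = f (x t i) + A *v (x t (p i) - x t i)" for t i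
  define Q where "Q u = u \<bullet> (A *v u)" for u
  define W where "W t = (\<Sum>i<N. \<Sum>j<N. (x t i - x t j) \<bullet> (x t i - x t j))" for t
  define W' where "W' t = (\<Sum>i<N. \<Sum>j<N. 2 * ((x t i - x t j) \<bullet> (v t i - v t j)))" for t
  have der: "(f has_derivative frechet_derivative f (at z)) (at z)" for z
    using smooth_diff[OF smooth] frechet_derivative_works by blast
  have q: "w \<bullet> frechet_derivative f (at z) w \<le> - lam * (w \<bullet> w)" for z w
    using contr_quad[OF contr[rule_format, of z] posA, of w] jac_eq[OF der[of z], of w] by simp
  have fc: "(a - b) \<bullet> (f a - f b) \<le> - lam * ((a - b) \<bullet> (a - b))" for a b
    by (rule mvt_contr[OF der q])
  have Wd: "(W has_real_derivative W' t) (at t within {0..})" if t0: "t \<ge> 0" for t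
  proof -
    have "((\<lambda>s. (x s i - x s j) \<bullet> (x s i - x s j)) has_real_derivative
        2 * ((x t i - x t j) \<bullet> (v t i - v t j))) (at t within {0..})" if "i < N" "j < N" for i j
      apply (rule sq_deriv)
      apply (rule has_vector_derivative_diff)
      using ode that t0 unfolding v_def p_def by auto
    thus ?thesis unfolding W_def W'_def by (auto intro!: DERIV_sum)
  qed
  have bij: "bij_betw p {..<N} {..<N}" unfolding p_def using N2 shift_bij by simp
  have reidx: "(\<Sum>i<N. \<Sum>j<N. g (p i) (p j)) = (\<Sum>i<N. \<Sum>j<N. g i j)" for g :: "nat \<Rightarrow> nat \<Rightarrow> real"
  proof -
    have "(\<Sum>i<N. \<Sum>j<N. g (p i) (p j)) = (\<Sum>i<N. \<Sum>j<N. g (p i) j)"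
      by (rule sum.cong[OF refl]) (rule sum.reindex_bij_betw[OF bij])
    also have "\<dots> = (\<Sum>i<N. \<Sum>j<N. g i j)"
      by (rule sum.reindex_bij_betw[OF bij, of "\<lambda>i. \<Sum>j<N. g i j"])
    finally show ?thesis .
  qed
  have Wle: "W' t \<le> - (2 * lam) * W t" if "t \<ge> 0" for t
  proof -
    define d where "d i j = x t i - x t j" for i j
    have pt: "2 * ((x t i - x t j) \<bullet> (v t i - v t j)) \<le>
        - (2 * lam) * (d i j \<bullet> d i j) + (Q (d (p i) (p j)) - Q (d i j))" for i j
    proof -
      have "v t i - v t j = (f (x t i) - f (x t j)) + A *v d (p i) (p j) - A *v d i j"
        unfolding v_def d_def by (simp add: matrix_vector_mult_diff_distrib algebra_simps)
      hence "(x t i - x t j) \<bullet> (v t i - v t j) = d i j \<bullet> (f (x t i) - f (x t j))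
          + d i j \<bullet> (A *v d (p i) (p j)) - Q (d i j)"
        unfolding Q_def d_def by (simp add: inner_add_right inner_diff_right)
      moreover have "d i j \<bullet> (f (x t i) - f (x t j)) \<le> - lam * (d i j \<bullet> d i j)"
        unfolding d_def by (rule fc)
      moreover have "d i j \<bullet> (A *v d (p i) (p j)) \<le> (Q (d i j) + Q (d (p i) (p j))) / 2"
        unfolding Q_def by (rule A_ineq[OF symA posA])
      ultimately show ?thesis by simp
    qed
    have "W' t \<le> (\<Sum>i<N. \<Sum>j<N. - (2 * lam) * (d i j \<bullet> d i j) + (Q (d (p i) (p j)) - Q (d i j)))"
      unfolding W'_def by (intro sum_mono pt)
    also have "\<dots> = - (2 * lam) * W t + ((\<Sum>i<N. \<Sum>j<N. Q (d (p i) (p j))) - (\<Sum>i<N. \<Sum>j<N. Q (d i j)))"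
      unfolding W_def d_def by (simp add: sum.distrib sum_subtractf sum_distrib_left sum_negf)
    also have "\<dots> = - (2 * lam) * W t"
      using reidx[of "\<lambda>i j. Q (d i j)"] by simp
    finally show ?thesis .
  qed
  have Wdecay: "W t \<le> W 0 * exp (- (2 * lam) * t)" if "t \<ge> 0" for t
    by (rule decay[of W W' "2 * lam"]) (use Wd Wle that in auto)
  show ?thesis
  proof (intro allI impI)
    fix i j assume ij: "i < N" "j < N"
    show "\<exists>c k. k > 0 \<and> (\<forall>t\<ge>0. norm (x t i - x t j) \<le> c * exp (- k * t))"
    proof (intro exI conjI allI impI)
      show "lam > 0" by (rule lam_pos)
      fix t :: real assume t: "t \<ge> 0"
      have nn: "\<And>a b. 0 \<le> (x t a - x t b) \<bullet> (x t a - x t b)" by simp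
      have "(x t i - x t j) \<bullet> (x t i - x t j) \<le> (\<Sum>j'<N. (x t i - x t j') \<bullet> (x t i - x t j'))"
        by (rule member_le_sum) (use ij nn in auto)
      also have "\<dots> \<le> W t" unfolding W_def
        by (rule member_le_sum[of i _ "\<lambda>i. \<Sum>j'<N. (x t i - x t j') \<bullet> (x t i - x t j')"])
          (use ij nn in \<open>auto intro: sum_nonneg\<close>)
      also have "\<dots> \<le> W 0 * exp (- (2 * lam) * t)" by (rule Wdecay[OF t])
      finally have "norm (x t i - x t j) ^ 2 \<le> W 0 * exp (- (2 * lam) * t)"
        by (simp add: power2_norm_eq_inner)
      hence "sqrt (norm (x t i - x t j) ^ 2) \<le> sqrt (W 0 * exp (- (2 * lam) * t))"
        using real_sqrt_le_mono by blast
      moreover have "exp (- (2 * lam) * t) = (exp (- lam * t))^2"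
        by (simp add: power2_eq_square exp_add[symmetric])
      ultimately show "norm (x t i - x t j) \<le> sqrt (W 0) * exp (- lam * t)"
        by (simp add: real_sqrt_mult)
    qed
  qed
qed

end
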